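(* Let $d\ge1$ and for $k=1,2$ let $(\boldsymbol X_k,Y_k)=(X_{k,1},\ldots,X_{k,d},Y_k)$ be a random vector with continuous marginals and $(d+1)$-dimensional copula $C_k$. Fix $\boldsymbol{\alpha}\in[0,1)^d$ with $C_k(\boldsymbol\alpha,1)<1$, and set $l_{\boldsymbol\alpha}(v)=\dfrac{v-C_1(\boldsymbol\alpha,v)}{v-C_2(\boldsymbol\alpha,v)}$. Suppose at least one of $C_1,C_2$ is $\mathrm{LTD}^1_{d+1}$ and $l_{\boldsymbol\alpha}(v)\ge l_{\boldsymbol\alpha}(1)$ for all $v\in(0,1]$. (i) If $Y_1\le_{\rm disp}Y_2$, then $\Delta\mathrm{VCoVaR}_{\boldsymbol\alpha,\beta}(Y_1|\boldsymbol X_1)\le\Delta\mathrm{VCoVaR}_{\boldsymbol\alpha,\beta}(Y_2|\boldsymbol X_2)$ for all $\beta\in(0,1)$. (ii) If $Y_1\le_\star Y_2$, then $\Delta^R\mathrm{VCoVaR}_{\boldsymbol\alpha,\beta}(Y_1|\boldsymbol X_1)\le\Delta^R\mathrm{VCoVaR}_{\boldsymbol\alpha,\beta}(Y_2|\boldsymbol X_2)$ for all $\beta\in(0,1)$.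
   Context: $C(\boldsymbol{\alpha},v)=C(\alpha_1,\ldots,\alpha_d,v)$. $F^{-1}(t)=\inf\{x:F(x)\ge t\}$, $\mathrm{VaR}_t(Z)=F_Z^{-1}(t)$. $\mathrm{VCoVaR}_{\boldsymbol\alpha,\beta}(Y_k|\boldsymbol X_k)$ is the $\beta$-quantile of the conditional distribution of $Y_k$ given $\{\exists\, i: X_{k,i}>\mathrm{VaR}_{\alpha_i}(X_{k,i})\}$. $\Delta\mathrm{VCoVaR}_{\boldsymbol\alpha,\beta}(Y|\boldsymbol X)=\mathrm{VCoVaR}_{\boldsymbol\alpha,\beta}(Y|\boldsymbol X)-\mathrm{VaR}_\beta(Y)$ and $\Delta^R\mathrm{VCoVaR}_{\boldsymbol\alpha,\beta}(Y|\boldsymbol X)=\Delta\mathrm{VCoVaR}_{\boldsymbol\alpha,\beta}(Y|\boldsymbol X)/\mathrm{VaR}_\beta(Y)$. A $(d+1)$-dimensional copula $C$ is $\mathrm{LTD}^1_{d+1}$ if, for $(U_1,\ldots,U_d,V)\sim C$, $P(U_1\le u_1,\ldots,U_d\le u_d\mid V\le v)$ is nonincreasing in $v$ for all $u_1,\ldots,u_d$ (i.e. $C(u_1,\ldots,u_d,v)/v$ is nonincreasing in $v$). Orders: $Y_1\le_{\rm disp}Y_2$ if $F_{Y_1}^{-1}(v)-F_{Y_1}^{-1}(u)\le F_{Y_2}^{-1}(v)-F_{Y_2}^{-1}(u)$ for all $0<u\le v<1$; $Y_1\le_\star Y_2$ if $F_{Y_2}^{-1}(u)/F_{Y_1}^{-1}(u)$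 is increasing in $u\in(0,1)$. *)

theory Defs
  imports "HOL-Probability.Probability"
begin

definition dfun :: "'a measure \<Rightarrow> ('a \<Rightarrow> real) \<Rightarrow> real \<Rightarrow> real" where
  "dfun M Z x = measure M {\<omega> \<in> space M. Z \<omega> \<le> x}"

text \<open>Generalised inverse F^{-1}(t) = inf {x. F x >= t}, valued in the extended reals
  (so that e.g. F^{-1}(0) = -infinity is represented correctly).\<close>
definition gen_inv :: "(real \<Rightarrow> real) \<Rightarrow> real \<Rightarrow> ereal" where
  "gen_inv F t = Inf (ereal ` {x. t \<le> F x})"

definition VaR :: "'a measure \<Rightarrow> ('a \<Rightarrow> real) \<Rightarrow> real \<Rightarrow> ereal" where
  "VaR M Z t = gen_inv (dfun M Z) t"

definition cont_marginals :: "'a measure \<Rightarrow> ('a \<Rightarrow> 'd \<Rightarrow> real) \<Rightarrow> ('a \<Rightarrow> real) \<Rightarrow> bool" where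
  "cont_marginals M X Y \<longleftrightarrow>
     (\<forall>i. continuous_on UNIV (dfun M (\<lambda>\<omega>. X \<omega> i))) \<and> continuous_on UNIV (dfun M Y)"

definition is_copula_of ::
  "'a measure \<Rightarrow> ('a \<Rightarrow> 'd \<Rightarrow> real) \<Rightarrow> ('a \<Rightarrow> real) \<Rightarrow> (('d \<Rightarrow> real) \<Rightarrow> real \<Rightarrow> real) \<Rightarrow> bool" where
  "is_copula_of M X Y C \<longleftrightarrow>
     (\<forall>u v. (\<forall>i. 0 \<le> u i \<and> u i \<le> 1) \<longrightarrow> 0 \<le> v \<longrightarrow> v \<le> 1 \<longrightarrow>
        C u v = measure M {\<omega> \<in> space M.
                   (\<forall>i. dfun M (\<lambda>\<omega>. X \<omega> i) (X \<omega> i) \<le> u i) \<and> dfun M Y (Y \<omega>) \<le> v})"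

definition LTD1 :: "(('d \<Rightarrow> real) \<Rightarrow> real \<Rightarrow> real) \<Rightarrow> bool" where
  "LTD1 C \<longleftrightarrow> (\<forall>u v v'. (\<forall>i. 0 \<le> u i \<and> u i \<le> 1) \<longrightarrow> 0 < v \<longrightarrow> v \<le> v' \<longrightarrow> v' \<le> 1 \<longrightarrow>
                   C u v' / v' \<le> C u v / v)"

definition stress_event :: "'a measure \<Rightarrow> ('a \<Rightarrow> 'd \<Rightarrow> real) \<Rightarrow> ('d \<Rightarrow> real) \<Rightarrow> 'a set" where
  "stress_event M X \<alpha> = {\<omega> \<in> space M. \<exists>i. ereal (X \<omega> i) > VaR M (\<lambda>\<omega>. X \<omega> i) (\<alpha> i)}"

definition VCoVaR ::
  "'a measure \<Rightarrow> ('a \<Rightarrow> 'd \<Rightarrow> real) \<Rightarrow> ('a \<Rightarrow> real) \<Rightarrow> ('d \<Rightarrow> real) \<Rightarrow> real \<Rightarrow> ereal" where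
  "VCoVaR M X Y \<alpha> \<beta> =
     gen_inv (\<lambda>y. measure M ({\<omega> \<in> space M. Y \<omega> \<le> y} \<inter> stress_event M X \<alpha>)
                    / measure M (stress_event M X \<alpha>)) \<beta>"

definition DeltaVCoVaR ::
  "'a measure \<Rightarrow> ('a \<Rightarrow> 'd \<Rightarrow> real) \<Rightarrow> ('a \<Rightarrow> real) \<Rightarrow> ('d \<Rightarrow> real) \<Rightarrow> real \<Rightarrow> real" where
  "DeltaVCoVaR M X Y \<alpha> \<beta> = real_of_ereal (VCoVaR M X Y \<alpha> \<beta>) - real_of_ereal (VaR M Y \<beta>)"

definition DeltaR_VCoVaR ::
  "'a measure \<Rightarrow> ('a \<Rightarrow> 'd \<Rightarrow> real) \<Rightarrow> ('a \<Rightarrow> real) \<Rightarrow> ('d \<Rightarrow> real) \<Rightarrow> real \<Rightarrow> real" where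
  "DeltaR_VCoVaR M X Y \<alpha> \<beta> = DeltaVCoVaR M X Y \<alpha> \<beta> / real_of_ereal (VaR M Y \<beta>)"

definition disp_le :: "'a measure \<Rightarrow> ('a \<Rightarrow> real) \<Rightarrow> 'b measure \<Rightarrow> ('b \<Rightarrow> real) \<Rightarrow> bool" where
  "disp_le M1 Y1 M2 Y2 \<longleftrightarrow> (\<forall>u v. 0 < u \<longrightarrow> u \<le> v \<longrightarrow> v < 1 \<longrightarrow>
      real_of_ereal (VaR M1 Y1 v) - real_of_ereal (VaR M1 Y1 u)
        \<le> real_of_ereal (VaR M2 Y2 v) - real_of_ereal (VaR M2 Y2 u))"

text \<open>Star order Y1 <=* Y2 (quantile ratio increasing; quantiles assumed positive so that
  the ratio is defined, as in the usual setting of positive random variables).\<close>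
definition star_le :: "'a measure \<Rightarrow> ('a \<Rightarrow> real) \<Rightarrow> 'b measure \<Rightarrow> ('b \<Rightarrow> real) \<Rightarrow> bool" where
  "star_le M1 Y1 M2 Y2 \<longleftrightarrow>
     (\<forall>u. 0 < u \<longrightarrow> u < 1 \<longrightarrow> 0 < real_of_ereal (VaR M1 Y1 u) \<and> 0 < real_of_ereal (VaR M2 Y2 u)) \<and>
     (\<forall>u v. 0 < u \<longrightarrow> u \<le> v \<longrightarrow> v < 1 \<longrightarrow>
      real_of_ereal (VaR M2 Y2 u) / real_of_ereal (VaR M1 Y1 u)
        \<le> real_of_ereal (VaR M2 Y2 v) / real_of_ereal (VaR M1 Y1 v))"

end

theory Submission
  imports Defs
begin

lemma dfun_cdf:
  assumes P: "prob_space M" and Z: "Z \<in> borel_measurable M"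
  shows "dfun M Z = cdf (distr M borel Z)"
proof
  fix x
  have "{\<omega> \<in> space M. Z \<omega> \<le> x} = Z -` {..x} \<inter> space M" by auto
  then show "dfun M Z x = cdf (distr M borel Z) x"
    unfolding dfun_def cdf_def using Z by (simp add: measure_distr)
qed

lemma dfun_props:
  assumes P: "prob_space M" and Z: "Z \<in> borel_measurable M"
  shows "mono (dfun M Z)" "\<And>x. 0 \<le> dfun M Z x" "\<And>x. dfun M Z x \<le> 1"
    "(dfun M Z \<longlongrightarrow> 1) at_top" "(dfun M Z \<longlongrightarrow> 0) at_bot"
proof -
  interpret real_distribution "distr M borel Z"
    using P Z by (simp add: prob_space.real_distribution_distr)
  show "mono (dfun M Z)" unfolding dfun_cdf[OF P Z] by (simp add: cdf_nondecreasing monoI)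
  show "\<And>x. 0 \<le> dfun M Z x" unfolding dfun_cdf[OF P Z] by (simp add: cdf_nonneg)
  show "\<And>x. dfun M Z x \<le> 1" unfolding dfun_cdf[OF P Z] by (simp add: cdf_bounded_prob)
  show "(dfun M Z \<longlongrightarrow> 1) at_top" unfolding dfun_cdf[OF P Z] by (simp add: cdf_lim_at_top_prob)
  show "(dfun M Z \<longlongrightarrow> 0) at_bot" unfolding dfun_cdf[OF P Z] by (simp add: cdf_lim_at_bot)
qed

lemma cdf_ivt:
  fixes F :: "real \<Rightarrow> real"
  assumes c: "continuous_on UNIV F" and top: "(F \<longlongrightarrow> 1) at_top" and bot: "(F \<longlongrightarrow> 0) at_bot"
    and t: "0 < t" "t < 1"
  shows "\<exists>y. F y = t"
proof -
  have "eventually (\<lambda>x. F x < t) at_bot" using order_tendstoD(2)[OF bot t(1)] .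
  then obtain a where a: "F a < t" by (auto simp: eventually_at_bot_linorder)
  have "eventually (\<lambda>x. F x > t) at_top" using order_tendstoD(1)[OF top t(2)] .
  then obtain b where b: "F b > t" "a \<le> b" by (auto simp: eventually_at_top_linorder) (metis nle_le order_refl)
  have "continuous_on {a..b} F" using c continuous_on_subset by blast
  then show ?thesis using IVT'[of F a t b] a b by auto
qed

lemma gen_inv_char:
  fixes F :: "real \<Rightarrow> real"
  assumes m: "mono F" and c: "continuous_on UNIV F" and top: "(F \<longlongrightarrow> 1) at_top" and bot: "(F \<longlongrightarrow> 0) at_bot"
    and t: "0 < t" "t < 1"
  shows "\<exists>r. gen_inv F t = ereal r \<and> F r = t \<and> (\<forall>x. t \<le> F x \<longleftrightarrow> r \<le> x)"
proof -
  define S where "S = {x. t \<le> F x}"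
  obtain y where y: "F y = t" using cdf_ivt[OF c top bot t] by blast
  have ne: "S \<noteq> {}" using y S_def by auto
  have "eventually (\<lambda>x. F x < t) at_bot" using order_tendstoD(2)[OF bot t(1)] .
  then obtain a where a: "\<And>x. x \<le> a \<Longrightarrow> F x < t" by (auto simp: eventually_at_bot_linorder)
  have ax: "a \<le> x" if "x \<in> S" for x
  proof (rule ccontr)
    assume "\<not> a \<le> x"
    then have "F x < t" using a by auto
    then show False using that S_def by auto
  qed
  have bdd: "bdd_below S" using ax by (rule bdd_belowI)
  have cl: "closed S" unfolding S_def using c by (intro closed_Collect_le continuous_intros) auto
  define r where "r = Inf S"
  have rS: "r \<in> S" using closed_contains_Inf[OF ne bdd cl] r_def by simp
  have ry: "r \<le> y" unfolding r_def by (rule cInf_lower) (use y S_def bdd in auto)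
  have "F r \<le> F y" using m ry by (rule monoD)
  then have Fr: "F r = t" using rS y unfolding S_def by simp
  have iff: "t \<le> F x \<longleftrightarrow> r \<le> x" for x
  proof
    assume "t \<le> F x" then show "r \<le> x" unfolding r_def by (intro cInf_lower bdd) (simp add: S_def)
  next
    assume "r \<le> x" then show "t \<le> F x" using Fr m by (metis monoD)
  qed
  have "gen_inv F t = (INF x\<in>S. ereal x)" unfolding gen_inv_def S_def by simp
  also have "\<dots> = ereal r" unfolding r_def using ereal_Inf'[OF bdd ne] by simp
  finally show ?thesis using Fr iff by blast
qed

lemma gen_inv_zero:
  assumes "\<And>x. 0 \<le> F x" shows "gen_inv F 0 = - \<infinity>"
proof -
  have "{x. 0 \<le> F x} = UNIV" using assms by auto
  have "\<forall>B. Inf (range ereal) \<le> ereal B" by (auto intro: Inf_lower)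
  then have "Inf (range ereal) = - \<infinity>" using ereal_bot by blast
  then show ?thesis unfolding gen_inv_def using \<open>{x. 0 \<le> F x} = UNIV\<close> by simp
qed

lemma gen_inv_mono: "s \<le> t \<Longrightarrow> gen_inv F s \<le> gen_inv F t"
  unfolding gen_inv_def by (rule Inf_superset_mono) auto

lemma dfun_comp_meas:
  assumes "continuous_on UNIV (dfun M Z)" and "Z \<in> borel_measurable M"
  shows "(\<lambda>\<omega>. dfun M Z (Z \<omega>)) \<in> borel_measurable M"
  using measurable_comp[OF assms(2) borel_measurable_continuous_onI[OF assms(1)]] by (simp add: o_def)

lemma meas_le:
  assumes P: "prob_space M" and Z: "Z \<in> borel_measurable M" and c: "continuous_on UNIV (dfun M Z)"
    and t: "0 \<le> t"
  shows "measure M {\<omega> \<in> space M. dfun M Z (Z \<omega>) \<le> t} \<le> t"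
proof -
  interpret prob_space M by (rule P)
  define F where "F = dfun M Z"
  define T where "T = {x. F x \<le> t}"
  note props = dfun_props[OF P Z, folded F_def]
  show ?thesis
  proof (cases "T = {}")
    case True
    then have e: "{\<omega> \<in> space M. dfun M Z (Z \<omega>) \<le> t} = {}" unfolding T_def F_def by auto
    show ?thesis unfolding e using t by simp
  next
    case ne: False
    show ?thesis
    proof (cases "bdd_above T")
      case False
      have all: "F x \<le> t" for x
      proof -
        have "\<not> (\<forall>y\<in>T. y \<le> x)" using False bdd_aboveI[of T x] by auto
        then obtain x' where x': "x' \<in> T" "x \<le> x'" by (auto simp: not_le intro: less_imp_le)
        have "F x \<le> F x'" using props(1) x'(2) by (rule monoD)
        then show ?thesis using x'(1) unfolding T_def by simp
      qed
      have "1 \<le> t" by (rule tendsto_upperbound[OF props(4)]) (use all in auto)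
      then show ?thesis using prob_le_1 order_trans by blast
    next
      case True
      have cl: "closed T" unfolding T_def F_def using c by (intro closed_Collect_le continuous_intros) auto
      define s where "s = Sup T"
      have sT: "s \<in> T" using closed_contains_Sup[OF ne True cl] s_def by simp
      have "{\<omega> \<in> space M. dfun M Z (Z \<omega>) \<le> t} \<subseteq> {\<omega> \<in> space M. Z \<omega> \<le> s}"
        unfolding s_def using True by (auto simp: T_def F_def intro: cSup_upper)
      then have "measure M {\<omega> \<in> space M. dfun M Z (Z \<omega>) \<le> t} \<le> measure M {\<omega> \<in> space M. Z \<omega> \<le> s}"
        by (intro finite_measure_mono) (use Z in measurable)
      also have "\<dots> = F s" unfolding F_def dfun_def ..
      also have "\<dots> \<le> t" using sT T_def by simp
      finally show ?thesis .
    qed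
  qed
qed

lemma meas_eq:
  assumes P: "prob_space M" and Z: "Z \<in> borel_measurable M" and c: "continuous_on UNIV (dfun M Z)"
    and t: "0 \<le> t" "t \<le> 1"
  shows "measure M {\<omega> \<in> space M. dfun M Z (Z \<omega>) \<le> t} = t"
proof -
  interpret prob_space M by (rule P)
  note props = dfun_props[OF P Z]
  have ms: "{\<omega> \<in> space M. dfun M Z (Z \<omega>) \<le> t} \<in> sets M"
    using dfun_comp_meas[OF c Z] by measurable
  have "t \<le> measure M {\<omega> \<in> space M. dfun M Z (Z \<omega>) \<le> t}"
  proof -
    consider "t = 0" | "t = 1" | "0 < t" "t < 1" using t by linarith
    then show ?thesis
    proof cases
      case 1 then show ?thesis by simp
    next
      case 2
      then have "{\<omega> \<in> space M. dfun M Z (Z \<omega>) \<le> t} = space M" using props(3) by auto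
      then show ?thesis using 2 by (simp add: prob_space)
    next
      case 3
      obtain y where y: "dfun M Z y = t" using cdf_ivt[OF c props(4,5) 3] by blast
      have "{\<omega> \<in> space M. Z \<omega> \<le> y} \<subseteq> {\<omega> \<in> space M. dfun M Z (Z \<omega>) \<le> t}"
        using y props(1) by (auto dest: monoD)
      then have "measure M {\<omega> \<in> space M. Z \<omega> \<le> y} \<le> measure M {\<omega> \<in> space M. dfun M Z (Z \<omega>) \<le> t}"
        by (intro finite_measure_mono ms)
      then show ?thesis using y unfolding dfun_def by simp
    qed
  qed
  then show ?thesis using meas_le[OF P Z c t(1)] by linarith
qed

lemma null_diff:
  assumes P: "prob_space M" and "A \<subseteq> B" "A \<in> sets M" "B \<in> sets M" "measure M B \<le> measure M A"
  shows "measure M (B - A) = 0"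
proof -
  interpret prob_space M by (rule P)
  have "measure M (B - A) = measure M B - measure M A" using assms by (intro finite_measure_Diff) auto
  then show ?thesis using assms(5) measure_nonneg[of M "B - A"] by linarith
qed

lemma null_eq:
  assumes P: "prob_space M" and "A \<subseteq> B" "A \<in> sets M" "B \<in> sets M" "measure M (B - A) \<le> 0"
  shows "measure M A = measure M B"
proof -
  interpret prob_space M by (rule P)
  have "measure M (B - A) = measure M B - measure M A" using assms by (intro finite_measure_Diff) auto
  then show ?thesis using assms(5) measure_nonneg[of M "B - A"] by linarith
qed

lemma stress_facts:
  fixes X :: "'a \<Rightarrow> 'd::finite \<Rightarrow> real" and C :: "('d \<Rightarrow> real) \<Rightarrow> real \<Rightarrow> real"
  assumes P: "prob_space M" and mX: "\<And>i. (\<lambda>\<omega>. X \<omega> i) \<in> borel_measurable M"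
    and mY: "Y \<in> borel_measurable M"
    and cont: "cont_marginals M X Y" and cop: "is_copula_of M X Y C"
    and alpha: "\<And>i. 0 \<le> \<alpha> i \<and> \<alpha> i < 1"
  shows "C \<alpha> 0 = 0"
    and "\<And>v w. 0 \<le> v \<Longrightarrow> v \<le> w \<Longrightarrow> w \<le> 1 \<Longrightarrow> C \<alpha> v \<le> C \<alpha> w \<and> C \<alpha> w - C \<alpha> v \<le> w - v"
    and "\<And>y. measure M ({\<omega>\<in>space M. Y \<omega> \<le> y} \<inter> stress_event M X \<alpha>) / measure M (stress_event M X \<alpha>)
            = (dfun M Y y - C \<alpha> (dfun M Y y)) / (1 - C \<alpha> 1)"
proof -
  interpret prob_space M by (rule P)
  define FY where "FY = dfun M Y"
  define Fi where "Fi i = dfun M (\<lambda>\<omega>. X \<omega> i)" for i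
  have cY: "continuous_on UNIV FY" and cX: "\<And>i. continuous_on UNIV (Fi i)"
    using cont unfolding cont_marginals_def FY_def Fi_def by auto
  have mFY[measurable]: "(\<lambda>\<omega>. FY (Y \<omega>)) \<in> borel_measurable M"
    unfolding FY_def using dfun_comp_meas[OF cY[unfolded FY_def] mY] .
  have mFX[measurable]: "(\<lambda>\<omega>. Fi i (X \<omega> i)) \<in> borel_measurable M" for i
    unfolding Fi_def using dfun_comp_meas[OF cX[unfolded Fi_def] mX] .
  have [measurable]: "Y \<in> borel_measurable M" by (rule mY)
  have [measurable]: "(\<lambda>\<omega>. X \<omega> i) \<in> borel_measurable M" for i by (rule mX)
  define Bs where "Bs v = {\<omega>\<in>space M. (\<forall>i. Fi i (X \<omega> i) \<le> \<alpha> i) \<and> FY (Y \<omega>) \<le> v}" for v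
  have Bs_sets: "Bs v \<in> sets M" for v unfolding Bs_def by measurable
  have Cv: "C \<alpha> v = measure M (Bs v)" if "0 \<le> v" "v \<le> 1" for v
  proof -
    have "\<forall>i. 0 \<le> \<alpha> i \<and> \<alpha> i \<le> 1" using alpha less_imp_le by blast
    then show ?thesis using cop that unfolding is_copula_of_def Bs_def Fi_def FY_def by blast
  qed
  define U where "U v = {\<omega>\<in>space M. FY (Y \<omega>) \<le> v}" for v
  have U_sets: "U v \<in> sets M" for v unfolding U_def by measurable
  have mU: "measure M (U v) = v" if "0 \<le> v" "v \<le> 1" for v
    unfolding U_def FY_def using meas_eq[OF P mY cY[unfolded FY_def] that] .
  show "C \<alpha> 0 = 0"
  proof -
    have "measure M (Bs 0) \<le> measure M (U 0)"
      by (intro finite_measure_mono U_sets) (auto simp: Bs_def U_def)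
    then show ?thesis using Cv[of 0] mU[of 0] measure_nonneg[of M "Bs 0"] by simp
  qed
  show "C \<alpha> v \<le> C \<alpha> w \<and> C \<alpha> w - C \<alpha> v \<le> w - v" if vw: "0 \<le> v" "v \<le> w" "w \<le> 1" for v w
  proof -
    have sub: "Bs v \<subseteq> Bs w" using vw unfolding Bs_def by auto
    have "measure M (Bs w - Bs v) = measure M (Bs w) - measure M (Bs v)"
      using sub Bs_sets by (intro finite_measure_Diff) auto
    moreover have "measure M (Bs w - Bs v) \<le> measure M (U w - U v)"
      by (intro finite_measure_mono) (use U_sets vw in \<open>auto simp: Bs_def U_def\<close>)
    moreover have "measure M (U w - U v) = measure M (U w) - measure M (U v)"
      by (rule finite_measure_Diff) (use U_sets vw in \<open>auto simp: U_def\<close>)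
    moreover have "measure M (Bs v) \<le> measure M (Bs w)" using sub Bs_sets by (intro finite_measure_mono) auto
    ultimately show ?thesis using Cv vw mU by auto
  qed
  define q where "q i = VaR M (\<lambda>\<omega>. X \<omega> i) (\<alpha> i)" for i
  define Ai where "Ai i = {\<omega>\<in>space M. ereal (X \<omega> i) \<le> q i}" for i
  define Bi where "Bi i = {\<omega>\<in>space M. Fi i (X \<omega> i) \<le> \<alpha> i}" for i
  have Bi_sets: "Bi i \<in> sets M" for i unfolding Bi_def by measurable
  have per_i: "Ai i \<in> sets M \<and> Ai i \<subseteq> Bi i \<and> measure M (Bi i - Ai i) \<le> 0" for i
  proof -
    note props = dfun_props[OF P mX[of i], folded Fi_def]
    show ?thesis
    proof (cases "\<alpha> i = 0")
      case True
      have "q i = - \<infinity>" unfolding q_def VaR_def True using props(2) Fi_def by (intro gen_inv_zero) auto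
      then have e: "Ai i = {}" unfolding Ai_def by auto
      have "measure M (Bi i) \<le> 0"
        unfolding Bi_def True Fi_def using meas_le[OF P mX[of i] cX[of i, unfolded Fi_def], of 0] by simp
      then show ?thesis using e by simp
    next
      case False
      then have a: "0 < \<alpha> i" "\<alpha> i < 1" using alpha[of i] by auto
      obtain r where r: "gen_inv (Fi i) (\<alpha> i) = ereal r" "Fi i r = \<alpha> i"
        using gen_inv_char[OF props(1) cX props(4,5) a] by blast
      have e: "Ai i = {\<omega>\<in>space M. X \<omega> i \<le> r}" unfolding Ai_def q_def VaR_def using r(1) Fi_def by simp
      have s1: "Ai i \<in> sets M" unfolding e by measurable
      have s2: "Ai i \<subseteq> Bi i"
      proof
        fix \<omega> assume "\<omega> \<in> Ai i"
        then have w: "\<omega> \<in> space M" "X \<omega> i \<le> r" unfolding e by auto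
        have "Fi i (X \<omega> i) \<le> Fi i r" using monoD[OF props(1) w(2)] .
        then show "\<omega> \<in> Bi i" unfolding Bi_def using w(1) r(2) by simp
      qed
      have "measure M (Ai i) = \<alpha> i" unfolding e using r(2) unfolding Fi_def dfun_def by simp
      moreover have "measure M (Bi i) = \<alpha> i" unfolding Bi_def Fi_def
        using meas_eq[OF P mX[of i] cX[of i, unfolded Fi_def], of "\<alpha> i"] a by simp
      ultimately have "measure M (Bi i - Ai i) = 0" using null_diff[OF P s2 s1 Bi_sets] by simp
      then show ?thesis using s1 s2 by simp
    qed
  qed
  define A where "A = space M - stress_event M X \<alpha>"
  have A_eq: "A = (\<Inter>i\<in>UNIV. Ai i)"
    unfolding A_def Ai_def stress_event_def q_def by (auto simp: not_less) (meson leD)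
  have A_sets: "A \<in> sets M" unfolding A_eq using per_i by (intro sets.finite_INT) auto
  have S_eq: "stress_event M X \<alpha> = space M - A" unfolding A_def stress_event_def by auto
  define B where "B = Bs 1"
  have B_eq: "B = (\<Inter>i\<in>UNIV. Bi i)"
    unfolding B_def Bs_def Bi_def FY_def using dfun_props(3)[OF P mY] by auto
  have AB: "A \<subseteq> B" unfolding A_eq B_eq using per_i by blast
  have BA: "measure M (B - A) \<le> 0"
  proof -
    have "B - A \<subseteq> (\<Union>i\<in>UNIV. Bi i - Ai i)" unfolding A_eq B_eq by blast
    moreover have "(\<Union>i\<in>UNIV. Bi i - Ai i) \<in> sets M"
      using per_i Bi_sets by (intro sets.finite_UN) auto
    ultimately have "measure M (B - A) \<le> measure M (\<Union>i\<in>UNIV. Bi i - Ai i)"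
      by (intro finite_measure_mono)
    also have "\<dots> \<le> (\<Sum>i\<in>UNIV. measure M (Bi i - Ai i))"
      by (intro finite_measure_subadditive_finite) (use per_i Bi_sets in auto)
    also have "\<dots> \<le> 0" using per_i by (intro sum_nonpos) auto
    finally show ?thesis .
  qed
  have mA: "measure M A = C \<alpha> 1"
    using null_eq[OF P AB A_sets _ BA] Bs_sets Cv[of 1] B_def by simp
  have mS: "measure M (stress_event M X \<alpha>) = 1 - C \<alpha> 1"
    unfolding S_eq using A_sets mA by (simp add: prob_compl)
  show "measure M ({\<omega>\<in>space M. Y \<omega> \<le> y} \<inter> stress_event M X \<alpha>) / measure M (stress_event M X \<alpha>)
            = (dfun M Y y - C \<alpha> (dfun M Y y)) / (1 - C \<alpha> 1)" for y
  proof -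
    define E where "E = {\<omega>\<in>space M. Y \<omega> \<le> y}"
    define D where "D = U (FY y)"
    have E_sets: "E \<in> sets M" unfolding E_def by measurable
    have fy: "0 \<le> FY y" "FY y \<le> 1" using dfun_props(2,3)[OF P mY] FY_def by auto
    have ED: "E \<subseteq> D"
    proof
      fix \<omega> assume "\<omega> \<in> E"
      then have w: "\<omega> \<in> space M" "Y \<omega> \<le> y" unfolding E_def by auto
      have "FY (Y \<omega>) \<le> FY y" unfolding FY_def using monoD[OF dfun_props(1)[OF P mY] w(2)] .
      then show "\<omega> \<in> D" unfolding D_def U_def using w(1) by simp
    qed
    have mE: "measure M E = FY y" unfolding E_def FY_def dfun_def ..
    have mD: "measure M D = FY y" unfolding D_def using mU fy by simp
    have DE: "measure M (D - E) = 0" using null_diff[OF P ED E_sets] U_sets D_def mD mE by simp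
    have DB: "D \<inter> B = Bs (FY y)" unfolding D_def B_def U_def Bs_def using fy by auto
    have sub: "E \<inter> A \<subseteq> D \<inter> B" using ED AB by auto
    have "measure M ((D \<inter> B) - (E \<inter> A)) \<le> measure M ((D - E) \<union> (B - A))"
      by (intro finite_measure_mono) (use A_sets E_sets U_sets Bs_sets D_def B_def in auto)
    also have "\<dots> \<le> measure M (D - E) + measure M (B - A)"
      by (intro measure_Un_le) (use A_sets E_sets U_sets Bs_sets D_def B_def in auto)
    also have "\<dots> \<le> 0" using DE BA by simp
    finally have "measure M (E \<inter> A) = measure M (D \<inter> B)"
      using null_eq[OF P sub] A_sets E_sets U_sets Bs_sets D_def B_def by auto
    then have mEA: "measure M (E \<inter> A) = C \<alpha> (FY y)" using DB Cv fy by simp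
    have "E \<inter> stress_event M X \<alpha> = E - (E \<inter> A)" unfolding S_eq E_def by auto
    then have "measure M (E \<inter> stress_event M X \<alpha>) = measure M E - measure M (E \<inter> A)"
      using A_sets E_sets by (simp add: finite_measure_Diff)
    then show ?thesis using mEA mE mS unfolding E_def FY_def by simp
  qed
qed

lemma quantile_comp:
  fixes h F :: "real \<Rightarrow> real"
  assumes hc: "continuous_on {0..1} h" and hm: "\<And>v w. 0 \<le> v \<Longrightarrow> v \<le> w \<Longrightarrow> w \<le> 1 \<Longrightarrow> h v \<le> h w"
    and h0: "h 0 = 0" and h1: "h 1 = 1" and Fb: "\<And>y. 0 \<le> F y \<and> F y \<le> 1"
    and b: "0 < \<beta>" "\<beta> < 1"
  shows "\<exists>\<gamma>. 0 < \<gamma> \<and> \<gamma> < 1 \<and> gen_inv (\<lambda>y. h (F y)) \<beta> = gen_inv F \<gamma> \<and> \<beta> \<le> h \<gamma>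
           \<and> (\<forall>v. 0 \<le> v \<and> v \<le> 1 \<and> \<beta> \<le> h v \<longrightarrow> \<gamma> \<le> v)"
proof -
  define K where "K = {v \<in> {0..1}. \<beta> \<le> h v}"
  have Keq: "K = {0..1} \<inter> h -` {\<beta>..}" by (auto simp: K_def)
  have Kc: "closed K" unfolding Keq using continuous_closed_preimage[OF hc] by auto
  have K1: "1 \<in> K" using h1 b by (auto simp: K_def)
  then have Kne: "K \<noteq> {}" by auto
  have Kb: "bdd_below K" by (rule bdd_belowI[of _ 0]) (auto simp: K_def)
  define \<gamma> where "\<gamma> = Inf K"
  have gK: "\<gamma> \<in> K" using closed_contains_Inf[OF Kne Kb Kc] \<gamma>_def by simp
  obtain x where x: "0 \<le> x" "x \<le> 1" "h x = \<beta>" using IVT'[of h 0 \<beta> 1] hc h0 h1 b by auto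
  have "\<gamma> \<le> x" unfolding \<gamma>_def using x Kb by (intro cInf_lower) (auto simp: K_def)
  moreover have "x \<noteq> 1" using x h1 b by auto
  ultimately have g1: "\<gamma> < 1" using x by auto
  have "\<gamma> \<noteq> 0" using gK h0 b by (auto simp: K_def)
  then have g0: "0 < \<gamma>" using gK by (auto simp: K_def)
  have iff: "\<beta> \<le> h v \<longleftrightarrow> \<gamma> \<le> v" if "0 \<le> v" "v \<le> 1" for v
  proof
    assume "\<beta> \<le> h v" then show "\<gamma> \<le> v" unfolding \<gamma>_def using that Kb by (intro cInf_lower) (auto simp: K_def)
  next
    assume "\<gamma> \<le> v" then show "\<beta> \<le> h v" using gK hm[of \<gamma> v] that by (auto simp: K_def)
  qed
  have "{y. \<beta> \<le> h (F y)} = {y. \<gamma> \<le> F y}" using iff Fb by auto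
  then have "gen_inv (\<lambda>y. h (F y)) \<beta> = gen_inv F \<gamma>" unfolding gen_inv_def by simp
  moreover have "\<beta> \<le> h \<gamma>" using gK by (auto simp: K_def)
  ultimately show ?thesis using g0 g1 iff by blast
qed

lemma vcovar_repr:
  fixes X :: "'a \<Rightarrow> 'd::finite \<Rightarrow> real" and C :: "('d \<Rightarrow> real) \<Rightarrow> real \<Rightarrow> real"
  assumes P: "prob_space M" and mX: "\<And>i. (\<lambda>\<omega>. X \<omega> i) \<in> borel_measurable M"
    and mY: "Y \<in> borel_measurable M"
    and cont: "cont_marginals M X Y" and cop: "is_copula_of M X Y C"
    and alpha: "\<And>i. 0 \<le> \<alpha> i \<and> \<alpha> i < 1" and Ca: "C \<alpha> 1 < 1"
    and b: "0 < \<beta>" "\<beta> < 1"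
  shows "\<exists>\<gamma>. 0 < \<gamma> \<and> \<gamma> < 1 \<and> VCoVaR M X Y \<alpha> \<beta> = VaR M Y \<gamma>
           \<and> \<beta> \<le> (\<gamma> - C \<alpha> \<gamma>) / (1 - C \<alpha> 1)
           \<and> (\<forall>v. 0 \<le> v \<and> v \<le> 1 \<and> \<beta> \<le> (v - C \<alpha> v) / (1 - C \<alpha> 1) \<longrightarrow> \<gamma> \<le> v)"
proof -
  note sf = stress_facts[where \<alpha>=\<alpha>, OF P mX mY cont cop alpha]
  define h where "h v = (v - C \<alpha> v) / (1 - C \<alpha> 1)" for v
  have den: "0 < 1 - C \<alpha> 1" using Ca by simp
  have cC: "continuous_on {0..1} (\<lambda>v. C \<alpha> v)"
    unfolding continuous_on_iff
  proof (intro ballI allI impI)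
    fix x e :: real assume x: "x \<in> {0..1}" and e: "0 < e"
    show "\<exists>d>0. \<forall>x'\<in>{0..1}. dist x' x < d \<longrightarrow> dist (C \<alpha> x') (C \<alpha> x) < e"
    proof (intro exI[of _ e] conjI ballI impI e)
      fix x' assume x': "x' \<in> {0..1}" and d: "dist x' x < e"
      have "\<bar>C \<alpha> x' - C \<alpha> x\<bar> \<le> \<bar>x' - x\<bar>"
      proof (cases "x \<le> x'")
        case True then show ?thesis using sf(2)[of x x'] x x' by auto
      next
        case False then show ?thesis using sf(2)[of x' x] x x' by auto
      qed
      then show "dist (C \<alpha> x') (C \<alpha> x) < e" using d by (simp add: dist_real_def)
    qed
  qed
  have hc: "continuous_on {0..1} h" unfolding h_def using cC den by (intro continuous_intros) auto
  have hm: "h v \<le> h w" if "0 \<le> v" "v \<le> w" "w \<le> 1" for v w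
    unfolding h_def using sf(2)[OF that] den by (intro divide_right_mono) auto
  have h0: "h 0 = 0" unfolding h_def using sf(1) by simp
  have h1: "h 1 = 1" unfolding h_def using den by simp
  have Fb: "0 \<le> dfun M Y y \<and> dfun M Y y \<le> 1" for y using dfun_props(2,3)[OF P mY] by auto
  have "VCoVaR M X Y \<alpha> \<beta> = gen_inv (\<lambda>y. h (dfun M Y y)) \<beta>"
    unfolding VCoVaR_def h_def using sf(3) by simp
  then show ?thesis using quantile_comp[OF hc hm h0 h1 Fb b] unfolding h_def VaR_def by auto
qed

lemma var_props:
  assumes P: "prob_space M" and mY: "Y \<in> borel_measurable M" and c: "continuous_on UNIV (dfun M Y)"
  shows "\<And>t. 0 < t \<Longrightarrow> t < 1 \<Longrightarrow> VaR M Y t = ereal (real_of_ereal (VaR M Y t))"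
    and "\<And>s t. 0 < s \<Longrightarrow> s \<le> t \<Longrightarrow> t < 1 \<Longrightarrow> real_of_ereal (VaR M Y s) \<le> real_of_ereal (VaR M Y t)"
proof -
  note props = dfun_props[OF P mY]
  show fin: "VaR M Y t = ereal (real_of_ereal (VaR M Y t))" if "0 < t" "t < 1" for t
    using gen_inv_char[OF props(1) c props(4,5) that] unfolding VaR_def by auto
  show "real_of_ereal (VaR M Y s) \<le> real_of_ereal (VaR M Y t)" if "0 < s" "s \<le> t" "t < 1" for s t
  proof -
    have "VaR M Y s \<le> VaR M Y t" unfolding VaR_def using that(2) by (rule gen_inv_mono)
    then show ?thesis using fin[of s] fin[of t] that by (metis ereal_less_eq(3) order.strict_trans1 order.strict_trans2)
  qed
qed

theorem theorem4p2:
  fixes M1 :: "'a measure" and M2 :: "'b measure"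
    and X1 :: "'a \<Rightarrow> 'd::finite \<Rightarrow> real" and Y1 :: "'a \<Rightarrow> real"
    and X2 :: "'b \<Rightarrow> 'd \<Rightarrow> real" and Y2 :: "'b \<Rightarrow> real"
    and C1 C2 :: "('d \<Rightarrow> real) \<Rightarrow> real \<Rightarrow> real"
    and \<alpha> :: "'d \<Rightarrow> real"
  assumes P1: "prob_space M1" and P2: "prob_space M2"
    and mX1: "\<And>i. (\<lambda>\<omega>. X1 \<omega> i) \<in> borel_measurable M1" and mY1: "Y1 \<in> borel_measurable M1"
    and mX2: "\<And>i. (\<lambda>\<omega>. X2 \<omega> i) \<in> borel_measurable M2" and mY2: "Y2 \<in> borel_measurable M2"
    and cont1: "cont_marginals M1 X1 Y1" and cont2: "cont_marginals M2 X2 Y2"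
    and cop1: "is_copula_of M1 X1 Y1 C1" and cop2: "is_copula_of M2 X2 Y2 C2"
    and alpha: "\<And>i. 0 \<le> \<alpha> i \<and> \<alpha> i < 1"
    and C1a: "C1 \<alpha> 1 < 1" and C2a: "C2 \<alpha> 1 < 1"
    and LTD: "LTD1 C1 \<or> LTD1 C2"
    and l: "\<And>v. 0 < v \<Longrightarrow> v \<le> 1 \<Longrightarrow>
              (v - C1 \<alpha> v) / (v - C2 \<alpha> v) \<ge> (1 - C1 \<alpha> 1) / (1 - C2 \<alpha> 1)"
  shows "(disp_le M1 Y1 M2 Y2 \<longrightarrow>
            (\<forall>\<beta>. 0 < \<beta> \<and> \<beta> < 1 \<longrightarrow> DeltaVCoVaR M1 X1 Y1 \<alpha> \<beta> \<le> DeltaVCoVaR M2 X2 Y2 \<alpha> \<beta>))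
       \<and> (star_le M1 Y1 M2 Y2 \<longrightarrow>
            (\<forall>\<beta>. 0 < \<beta> \<and> \<beta> < 1 \<longrightarrow> DeltaR_VCoVaR M1 X1 Y1 \<alpha> \<beta> \<le> DeltaR_VCoVaR M2 X2 Y2 \<alpha> \<beta>))"
proof -
  note sf1 = stress_facts[where \<alpha>=\<alpha>, OF P1 mX1 mY1 cont1 cop1 alpha]
  note sf2 = stress_facts[where \<alpha>=\<alpha>, OF P2 mX2 mY2 cont2 cop2 alpha]
  have cY1: "continuous_on UNIV (dfun M1 Y1)" using cont1 unfolding cont_marginals_def by auto
  have cY2: "continuous_on UNIV (dfun M2 Y2)" using cont2 unfolding cont_marginals_def by auto
  note vp1 = var_props[OF P1 mY1 cY1]
  note vp2 = var_props[OF P2 mY2 cY2]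
  define Q1 where "Q1 t = real_of_ereal (VaR M1 Y1 t)" for t
  define Q2 where "Q2 t = real_of_ereal (VaR M2 Y2 t)" for t
  define a1 where "a1 = 1 - C1 \<alpha> 1"
  define a2 where "a2 = 1 - C2 \<alpha> 1"
  have a1: "0 < a1" using C1a a1_def by simp
  have a2: "0 < a2" using C2a a2_def by simp
  have aa: "\<forall>i. 0 \<le> \<alpha> i \<and> \<alpha> i \<le> 1" using alpha less_imp_le by blast
  have hge: "(v - C2 \<alpha> v) / a2 \<le> (v - C1 \<alpha> v) / a1" if v: "0 < v" "v \<le> 1" for v
  proof -
    have lv: "a1 / a2 \<le> (v - C1 \<alpha> v) / (v - C2 \<alpha> v)" using l[OF v] a1_def a2_def by simp
    have "C2 \<alpha> v - C2 \<alpha> 0 \<le> v - 0" using sf2(2)[of 0 v] v by auto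
    then have nn: "0 \<le> v - C2 \<alpha> v" using sf2(1) by simp
    have pos: "0 < v - C2 \<alpha> v"
    proof (rule ccontr)
      assume "\<not> 0 < v - C2 \<alpha> v"
      then have "v - C2 \<alpha> v = 0" using nn by simp
      then have "a1 / a2 \<le> 0" using lv by simp
      then show False using a1 a2 by (simp add: divide_le_0_iff)
    qed
    have "a1 * (v - C2 \<alpha> v) \<le> a2 * (v - C1 \<alpha> v)"
      using lv pos a2 by (simp add: field_simps)
    then show ?thesis using a1 a2 by (simp add: field_simps)
  qed
  have ltd_bound: "\<beta> \<le> \<gamma>" if L: "LTD1 C" and g: "0 < \<gamma>" "\<gamma> < 1" and hb: "\<beta> \<le> (\<gamma> - C \<alpha> \<gamma>) / (1 - C \<alpha> 1)"
    and Ca: "C \<alpha> 1 < 1" for C :: "('d \<Rightarrow> real) \<Rightarrow> real \<Rightarrow> real" and \<beta> \<gamma> :: real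
  proof -
    have H: "\<forall>u v v'. (\<forall>i. 0 \<le> u i \<and> u i \<le> 1) \<longrightarrow> 0 < v \<longrightarrow> v \<le> v' \<longrightarrow> v' \<le> 1 \<longrightarrow>
                   C u v' / v' \<le> C u v / v" using L unfolding LTD1_def .
    have "C \<alpha> 1 / 1 \<le> C \<alpha> \<gamma> / \<gamma>" using spec[OF spec[OF spec[OF H, of \<alpha>], of \<gamma>], of 1] aa g by simp
    then have "C \<alpha> 1 * \<gamma> \<le> C \<alpha> \<gamma>" using g by (simp add: le_divide_eq)
    then have "\<gamma> - C \<alpha> \<gamma> \<le> \<gamma> * (1 - C \<alpha> 1)" by (simp add: algebra_simps)
    then have "(\<gamma> - C \<alpha> \<gamma>) / (1 - C \<alpha> 1) \<le> \<gamma>" using Ca by (simp add: pos_divide_le_eq)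
    then show ?thesis using hb by linarith
  qed
  have key: "\<exists>\<gamma>1 \<gamma>2. 0 < \<gamma>1 \<and> \<gamma>1 < 1 \<and> 0 < \<gamma>2 \<and> \<gamma>2 < 1 \<and> \<gamma>1 \<le> \<gamma>2 \<and>
     (\<gamma>1 < \<beta> \<longrightarrow> \<beta> \<le> \<gamma>2) \<and>
     DeltaVCoVaR M1 X1 Y1 \<alpha> \<beta> = Q1 \<gamma>1 - Q1 \<beta> \<and> DeltaVCoVaR M2 X2 Y2 \<alpha> \<beta> = Q2 \<gamma>2 - Q2 \<beta>"
    if b: "0 < \<beta>" "\<beta> < 1" for \<beta> :: real
  proof -
    obtain \<gamma>1 where g1: "0 < \<gamma>1" "\<gamma>1 < 1" "VCoVaR M1 X1 Y1 \<alpha> \<beta> = VaR M1 Y1 \<gamma>1"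
      "\<beta> \<le> (\<gamma>1 - C1 \<alpha> \<gamma>1) / (1 - C1 \<alpha> 1)"
      "\<forall>v. 0 \<le> v \<and> v \<le> 1 \<and> \<beta> \<le> (v - C1 \<alpha> v) / (1 - C1 \<alpha> 1) \<longrightarrow> \<gamma>1 \<le> v"
      using vcovar_repr[where \<alpha>=\<alpha>, OF P1 mX1 mY1 cont1 cop1 alpha C1a b] by blast
    obtain \<gamma>2 where g2: "0 < \<gamma>2" "\<gamma>2 < 1" "VCoVaR M2 X2 Y2 \<alpha> \<beta> = VaR M2 Y2 \<gamma>2"
      "\<beta> \<le> (\<gamma>2 - C2 \<alpha> \<gamma>2) / (1 - C2 \<alpha> 1)"
      "\<forall>v. 0 \<le> v \<and> v \<le> 1 \<and> \<beta> \<le> (v - C2 \<alpha> v) / (1 - C2 \<alpha> 1) \<longrightarrow> \<gamma>2 \<le> v"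
      using vcovar_repr[where \<alpha>=\<alpha>, OF P2 mX2 mY2 cont2 cop2 alpha C2a b] by blast
    have "\<beta> \<le> (\<gamma>2 - C1 \<alpha> \<gamma>2) / (1 - C1 \<alpha> 1)"
      using g2(4) hge[of \<gamma>2] g2(1,2) a1_def a2_def by simp
    then have le: "\<gamma>1 \<le> \<gamma>2" using g1(5) g2(1,2) by simp
    have cs: "\<gamma>1 < \<beta> \<longrightarrow> \<beta> \<le> \<gamma>2"
    proof
      assume lt: "\<gamma>1 < \<beta>"
      have "\<not> LTD1 C1" using ltd_bound[where C=C1, OF _ g1(1,2,4) C1a] lt by auto
      then have "LTD1 C2" using LTD by simp
      then show "\<beta> \<le> \<gamma>2" using ltd_bound[where C=C2, OF _ g2(1,2,4) C2a] by simp
    qed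
    have e1: "DeltaVCoVaR M1 X1 Y1 \<alpha> \<beta> = Q1 \<gamma>1 - Q1 \<beta>" unfolding DeltaVCoVaR_def Q1_def g1(3) ..
    have e2: "DeltaVCoVaR M2 X2 Y2 \<alpha> \<beta> = Q2 \<gamma>2 - Q2 \<beta>" unfolding DeltaVCoVaR_def Q2_def g2(3) ..
    show ?thesis
      by (intro exI[of _ \<gamma>1] exI[of _ \<gamma>2] conjI g1(1) g1(2) g2(1) g2(2) le cs e1 e2)
  qed
  have mono1: "Q1 s \<le> Q1 t" if "0 < s" "s \<le> t" "t < 1" for s t using vp1(2)[OF that] Q1_def by simp
  have mono2: "Q2 s \<le> Q2 t" if "0 < s" "s \<le> t" "t < 1" for s t using vp2(2)[OF that] Q2_def by simp
  show ?thesis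
  proof (intro conjI impI allI)
    fix \<beta> :: real assume D: "disp_le M1 Y1 M2 Y2" and b: "0 < \<beta> \<and> \<beta> < 1"
    then obtain \<gamma>1 \<gamma>2 where k: "0 < \<gamma>1" "\<gamma>1 < 1" "0 < \<gamma>2" "\<gamma>2 < 1" "\<gamma>1 \<le> \<gamma>2"
      "\<gamma>1 < \<beta> \<longrightarrow> \<beta> \<le> \<gamma>2"
      "DeltaVCoVaR M1 X1 Y1 \<alpha> \<beta> = Q1 \<gamma>1 - Q1 \<beta>" "DeltaVCoVaR M2 X2 Y2 \<alpha> \<beta> = Q2 \<gamma>2 - Q2 \<beta>"
      using key by blast
    show "DeltaVCoVaR M1 X1 Y1 \<alpha> \<beta> \<le> DeltaVCoVaR M2 X2 Y2 \<alpha> \<beta>"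
    proof (cases "\<beta> \<le> \<gamma>1")
      case True
      have "Q1 \<gamma>1 - Q1 \<beta> \<le> Q2 \<gamma>1 - Q2 \<beta>" using D b True k unfolding disp_le_def Q1_def Q2_def by auto
      moreover have "Q2 \<gamma>1 \<le> Q2 \<gamma>2" using mono2 k by auto
      ultimately show ?thesis using k by linarith
    next
      case False
      have "Q1 \<gamma>1 \<le> Q1 \<beta>" using mono1 k b False by auto
      moreover have "Q2 \<beta> \<le> Q2 \<gamma>2" using mono2 k b False by auto
      ultimately show ?thesis using k by linarith
    qed
  next
    fix \<beta> :: real assume S: "star_le M1 Y1 M2 Y2" and b: "0 < \<beta> \<and> \<beta> < 1"
    then obtain \<gamma>1 \<gamma>2 where k: "0 < \<gamma>1" "\<gamma>1 < 1" "0 < \<gamma>2" "\<gamma>2 < 1" "\<gamma>1 \<le> \<gamma>2"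
      "\<gamma>1 < \<beta> \<longrightarrow> \<beta> \<le> \<gamma>2"
      "DeltaVCoVaR M1 X1 Y1 \<alpha> \<beta> = Q1 \<gamma>1 - Q1 \<beta>" "DeltaVCoVaR M2 X2 Y2 \<alpha> \<beta> = Q2 \<gamma>2 - Q2 \<beta>"
      using key by blast
    have pos: "0 < Q1 t" "0 < Q2 t" if "0 < t" "t < 1" for t
      using S that unfolding star_le_def Q1_def Q2_def by auto
    have p1b: "0 < Q1 \<beta>" and p2b: "0 < Q2 \<beta>" and p1g: "0 < Q1 \<gamma>1" and p2g: "0 < Q2 \<gamma>2"
      using pos b k by auto
    have R1: "DeltaR_VCoVaR M1 X1 Y1 \<alpha> \<beta> = Q1 \<gamma>1 / Q1 \<beta> - 1"
      unfolding DeltaR_VCoVaR_def k(7) using p1b Q1_def by (simp add: diff_divide_distrib)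
    have R2: "DeltaR_VCoVaR M2 X2 Y2 \<alpha> \<beta> = Q2 \<gamma>2 / Q2 \<beta> - 1"
      unfolding DeltaR_VCoVaR_def k(8) using p2b Q2_def by (simp add: diff_divide_distrib)
    have "Q1 \<gamma>1 / Q1 \<beta> \<le> Q2 \<gamma>2 / Q2 \<beta>"
    proof (cases "\<beta> \<le> \<gamma>1")
      case True
      have st: "Q2 \<beta> / Q1 \<beta> \<le> Q2 \<gamma>1 / Q1 \<gamma>1" using S b True k unfolding star_le_def Q1_def Q2_def by auto
      have pg1: "0 < Q1 \<gamma>1" "0 < Q2 \<gamma>1" using pos k by auto
      have "Q2 \<beta> * Q1 \<gamma>1 \<le> Q2 \<gamma>1 * Q1 \<beta>" using st pg1 p1b by (simp add: divide_le_eq le_divide_eq field_simps)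
      then have "Q1 \<gamma>1 / Q1 \<beta> \<le> Q2 \<gamma>1 / Q2 \<beta>" using p1b p2b by (simp add: divide_le_eq le_divide_eq field_simps)
      moreover have "Q2 \<gamma>1 / Q2 \<beta> \<le> Q2 \<gamma>2 / Q2 \<beta>" using mono2 k p2b by (intro divide_right_mono) auto
      ultimately show ?thesis by linarith
    next
      case False
      have "Q1 \<gamma>1 \<le> Q1 \<beta>" using mono1 k b False by auto
      then have "Q1 \<gamma>1 / Q1 \<beta> \<le> 1" using p1b by simp
      moreover have "Q2 \<beta> \<le> Q2 \<gamma>2" using mono2 k b False by auto
      then have "1 \<le> Q2 \<gamma>2 / Q2 \<beta>" using p2b by simp
      ultimately show ?thesis by linarith
    qed
    then show "DeltaR_VCoVaR M1 X1 Y1 \<alpha> \<beta> \<le> DeltaR_VCoVaR M2 X2 Y2 \<alpha> \<beta>" using R1 R2 by simp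
  qed
qed

end
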